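(* Let $q\ge5$ be coprime to $6$, let $\chi$ be a real primitive Dirichlet character of conductor $q$, and let $f:\mathbb{N}\to\{-1,1\}$ be a multiplicative function with $\mathbb{D}(f,\chi;\infty)<\infty$. If $S\subset\{0,1,2,3\}$ has size $2$ or $3$, then $\Xi_{\boldsymbol a}(S)=0$ for any vector $\boldsymbol a=(a_j)_{j\in S}$ of divisors of $q$.
   Context: $\mathbb{D}(f,g;\infty)^2=\lim_{x\to\infty}\sum_{p\le x}\frac{1-\mathrm{Re}(f(p)\overline{g(p)})}{p}$. For $S\subseteq\{0,1,2,3\}$ and $\boldsymbol a=(a_j)_{j\in S}$, $\Xi_{\boldsymbol a}(S):=\sum\prod_{j\in S}\chi(b_j)$, the sum over residues $(b_j)_{j\in S}$ mod $q$ for which there exist integers $n,d$ with $a_j\mid n+jd$ and $(n+jd)/a_j\equiv b_j\pmod q$ for all $j\in S$. *)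

theory Defs
  imports "HOL-Analysis.Analysis" "HOL-Number_Theory.Number_Theory" "HOL-Library.FuncSet"
begin

definition dirichlet_char :: "nat \<Rightarrow> (int \<Rightarrow> complex) \<Rightarrow> bool" where
  "dirichlet_char q chi \<longleftrightarrow> q > 0 \<and>
     (\<forall>n. chi (n + int q) = chi n) \<and>
     (\<forall>m n. chi (m * n) = chi m * chi n) \<and>
     chi 1 = 1 \<and>
     (\<forall>n. chi n = 0 \<longleftrightarrow> \<not> coprime n (int q))"

text \<open>Primitive modulo q (i.e. of conductor q): not induced by a character of any
  proper modulus d dividing q.\<close>
definition primitive_dirichlet_char :: "nat \<Rightarrow> (int \<Rightarrow> complex) \<Rightarrow> bool" where
  "primitive_dirichlet_char q chi \<longleftrightarrow> dirichlet_char q chi \<and>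
     (\<forall>d. d dvd q \<and> d < q \<longrightarrow>
        (\<exists>n. coprime n (int q) \<and> [n = 1] (mod int d) \<and> chi n \<noteq> 1))"

definition real_char :: "(int \<Rightarrow> complex) \<Rightarrow> bool" where
  "real_char chi \<longleftrightarrow> (\<forall>n. chi n \<in> \<real>)"

definition multiplicative_fn :: "(nat \<Rightarrow> int) \<Rightarrow> bool" where
  "multiplicative_fn f \<longleftrightarrow> f 1 = 1 \<and> (\<forall>m n. coprime m n \<longrightarrow> f (m * n) = f m * f n)"

definition pdist_sq :: "(nat \<Rightarrow> complex) \<Rightarrow> (nat \<Rightarrow> complex) \<Rightarrow> nat \<Rightarrow> real" where
  "pdist_sq f g x = (\<Sum>p | prime p \<and> p \<le> x. (1 - Re (f p * cnj (g p))) / real p)"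

definition pdist_finite :: "(nat \<Rightarrow> complex) \<Rightarrow> (nat \<Rightarrow> complex) \<Rightarrow> bool" where
  "pdist_finite f g \<longleftrightarrow> (\<exists>L. (pdist_sq f g \<longlongrightarrow> L) at_top)"

definition admissible :: "nat \<Rightarrow> nat set \<Rightarrow> (nat \<Rightarrow> int) \<Rightarrow> (nat \<Rightarrow> int) \<Rightarrow> bool" where
  "admissible q S a b \<longleftrightarrow> (\<exists>n d :: int. \<forall>j\<in>S.
      a j dvd (n + int j * d) \<and> [(n + int j * d) div a j = b j] (mod int q))"

definition Xi :: "nat \<Rightarrow> (int \<Rightarrow> complex) \<Rightarrow> nat set \<Rightarrow> (nat \<Rightarrow> int) \<Rightarrow> complex" where
  "Xi q chi S a = (\<Sum>b \<in> {b \<in> PiE S (\<lambda>_. {0..<int q}). admissible q S a b}.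
                    \<Prod>j\<in>S. chi (b j))"

end

theory Submission
  imports Defs
begin

lemma char_period:
  assumes "dirichlet_char q chi"
  shows "chi (n + int q * k) = chi n"
proof (induction k rule: int_induct[where k=0])
  case base then show ?case by simp
next
  case (step1 i)
  have "chi (n + int q * (i+1)) = chi ((n + int q * i) + int q)" by (simp add: algebra_simps)
  also have "\<dots> = chi (n + int q * i)" using assms unfolding dirichlet_char_def by blast
  finally show ?case using step1 by simp
next
  case (step2 i)
  have "chi (n + int q * i) = chi ((n + int q * (i - 1)) + int q)" by (simp add: algebra_simps)
  also have "\<dots> = chi (n + int q * (i - 1))" using assms unfolding dirichlet_char_def by blast
  finally show ?case using step2 by simp
qed

lemma char_mod:
  assumes "dirichlet_char q chi"
  shows "chi (n mod int q) = chi n"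
proof -
  have "n = n mod int q + int q * (n div int q)" by simp
  then show ?thesis using char_period[OF assms, of "n mod int q" "n div int q"] by metis
qed

lemma char_mult:
  assumes "dirichlet_char q chi"
  shows "chi (m * n) = chi m * chi n"
  using assms unfolding dirichlet_char_def by blast

lemma char_pow:
  assumes "dirichlet_char q chi"
  shows "chi (m ^ k) = chi m ^ k"
  by (induction k) (use assms in \<open>auto simp: dirichlet_char_def\<close>)

lemma char_minus1:
  assumes "primitive_dirichlet_char q chi" "real_char chi" "q \<ge> 2"
  shows "\<exists>t. 0 \<le> t \<and> t < int q \<and> chi t = -1"
proof -
  have dc: "dirichlet_char q chi" using assms(1) unfolding primitive_dirichlet_char_def by blast
  obtain n where n: "coprime n (int q)" "chi n \<noteq> 1"
    using assms(1,3) unfolding primitive_dirichlet_char_def by (metis cong_1 one_dvd less_le_trans one_less_numeral_iff semiring_norm(76))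
  define t where "t = n mod int q"
  have t0: "0 \<le> t" "t < int q" using assms(3) by (auto simp: t_def)
  have ct: "chi t = chi n" using char_mod[OF dc] t_def by simp
  have cop: "coprime t (int q)" using n(1) assms(3) unfolding t_def by (simp add: coprime_mod_left_iff)
  have copn: "coprime (nat t) q" using cop t0 by (metis coprime_int_iff int_nat_eq nat_eq_iff)
  have e: "[nat t ^ totient q = 1] (mod q)" using euler_theorem[OF copn] .
  hence "int (nat t ^ totient q) mod int q = 1 mod int q"
    by (metis cong_def of_nat_mod of_nat_1 cong_int_iff)
  hence "(t ^ totient q) mod int q = 1 mod int q" using t0 by simp
  hence "chi (t ^ totient q) = chi 1" by (metis char_mod[OF dc])
  hence pw: "chi t ^ totient q = 1" using dc char_pow[OF dc] unfolding dirichlet_char_def by simp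
  have tp: "totient q > 0" using assms(3) by simp
  obtain r where r: "chi t = of_real r" using assms(2) unfolding real_char_def by (metis Reals_cases)
  have "r ^ totient q = 1" using pw r by (metis of_real_eq_1_iff of_real_power)
  hence "\<bar>r\<bar> = 1" using tp proof - have "\<bar>r\<bar> ^ totient q = 1 ^ totient q" using \<open>r ^ totient q = 1\<close> by (metis power_abs abs_one power_one) thus ?thesis using tp power_eq_imp_eq_base[of "\<bar>r\<bar>" "totient q" 1] by simp qed
  hence "r = 1 \<or> r = -1" by auto
  hence "chi t = -1" using r ct n(2) by auto
  thus ?thesis using t0 by blast
qed


lemma sum_neg_zero:
  fixes F :: "'b \<Rightarrow> complex"
  assumes "finite A" "g ` A \<subseteq> A" "inj_on g A" "\<forall>b\<in>A. F (g b) = - F b"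
  shows "sum F A = 0"
proof -
  have im: "g ` A = A" using endo_inj_surj[OF assms(1,2,3)] .
  have "sum F A = sum F (g ` A)" using im by simp
  also have "\<dots> = sum (F \<circ> g) A" using sum.reindex[OF assms(3)] by simp
  also have "\<dots> = sum (\<lambda>b. - F b) A" using assms(4) by (intro sum.cong) auto
  also have "\<dots> = - sum F A" by (simp add: sum_negf)
  finally show ?thesis by simp
qed

lemma scale_inj:
  fixes t x y Q :: int
  assumes "coprime t Q" "0 \<le> x" "x < Q" "0 \<le> y" "y < Q" "(t*x) mod Q = (t*y) mod Q"
  shows "x = y"
proof -
  have "Q dvd t * (x - y)" using assms(6) by (metis mod_eq_dvd_iff right_diff_distrib)
  hence "Q dvd x - y" using assms(1) by (metis coprime_commute coprime_dvd_mult_right_iff)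
  then obtain k where k: "x - y = Q * k" by blast
  have "k = 0"
  proof (rule ccontr)
    assume "k \<noteq> 0"
    hence "\<bar>Q * k\<bar> \<ge> Q" using assms by (simp add: abs_mult mult_le_cancel_left1)
    thus False using k assms by auto
  qed
  thus ?thesis using k by simp
qed

lemma adm_scale:
  assumes "admissible q S a b" "\<forall>j\<in>S. a j \<noteq> 0"
  shows "admissible q S a (\<lambda>j. if j \<in> S then (t * b j) mod int q else b j)"
proof -
  obtain n d where nd: "\<forall>j\<in>S. a j dvd (n + int j * d) \<and> [(n + int j * d) div a j = b j] (mod int q)"
    using assms(1) unfolding admissible_def by blast
  have "\<forall>j\<in>S. a j dvd (t*n + int j * (t*d)) \<and> [(t*n + int j * (t*d)) div a j = (if j \<in> S then (t * b j) mod int q else b j)] (mod int q)"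
  proof
    fix j assume j: "j \<in> S"
    have e: "t*n + int j * (t*d) = t * (n + int j * d)" by (simp add: algebra_simps)
    have dv: "a j dvd (n + int j * d)" using nd j by blast
    have "(t*n + int j * (t*d)) div a j = t * ((n + int j * d) div a j)"
      unfolding e using dv by (simp add: div_mult_swap)
    moreover have "[t * ((n + int j * d) div a j) = t * b j] (mod int q)"
      using nd j by (simp add: cong_scalar_left)
    moreover have "[t * b j = (t * b j) mod int q] (mod int q)" by (simp add: cong_def)
    ultimately show "a j dvd (t*n + int j * (t*d)) \<and> [(t*n + int j * (t*d)) div a j = (if j \<in> S then (t * b j) mod int q else b j)] (mod int q)"
      using j e dv by (auto intro: cong_trans)
  qed
  thus ?thesis unfolding admissible_def by blast
qed

lemma adm_two:
  fixes i j :: nat and a b :: "nat \<Rightarrow> int"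
  assumes "i < j" "j \<le> 3" "coprime q 6" "a i > 0" "a j > 0" "a j dvd int q"
  shows "admissible q {i, j} a b"
proof -
  define m where "m = int j - int i"
  have m: "m \<in> {1,2,3}" using assms(1,2) unfolding m_def by auto
  have "m dvd 6" using m by auto
  hence cqm: "coprime (int q) m" using assms(3)
    by (metis coprime_divisors dvd_refl coprime_int_iff of_nat_numeral)
  have cjm: "coprime (a j) m" using cqm assms(6) by (meson coprime_divisors dvd_refl)
  have "coprime (a j * int q) m" using cqm cjm by simp
  then obtain u where u: "[a j * int q * u = 1] (mod m)" using cong_solve_coprime_int by blast
  define c where "c = a i * b i - a j * b j"
  define y where "y = b j + int q * (u * c)"
  define x where "x = b i"
  have "[a j * y - a i * x = a j * b j - a i * b i + (a j * int q * u) * c] (mod m)"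
    unfolding y_def x_def by (simp add: algebra_simps)
  moreover have "[a j * b j - a i * b i + (a j * int q * u) * c = a j * b j - a i * b i + 1 * c] (mod m)"
    using u by (intro cong_add cong_mult) auto
  ultimately have "[a j * y - a i * x = 0] (mod m)" unfolding c_def by (simp add: cong_trans)
  hence mdv: "m dvd a j * y - a i * x" by (simp add: cong_0_iff)
  define d where "d = (a j * y - a i * x) div m"
  have md: "m * d = a j * y - a i * x" unfolding d_def using mdv by simp
  define n where "n = a i * x - int i * d"
  have e1: "n + int i * d = a i * x" unfolding n_def by simp
  have e2: "n + int j * d = a j * y" unfolding n_def using md unfolding m_def by (simp add: algebra_simps)
  have c1: "[(n + int i * d) div a i = b i] (mod int q)" using e1 assms(4) unfolding x_def by simp
  have c2: "[(n + int j * d) div a j = b j] (mod int q)" using e2 assms(5) unfolding y_def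
    by (simp add: cong_def)
  have d1: "a i dvd (n + int i * d)" using e1 by simp
  have d2: "a j dvd (n + int j * d)" using e2 by simp
  have "\<forall>k\<in>{i, j}. a k dvd (n + int k * d) \<and> [(n + int k * d) div a k = b k] (mod int q)"
    using d1 d2 c1 c2 by blast
  thus ?thesis unfolding admissible_def by blast
qed


theorem lemma6p2:
  fixes q :: nat and chi :: "int \<Rightarrow> complex" and f :: "nat \<Rightarrow> int"
    and S :: "nat set" and a :: "nat \<Rightarrow> int"
  assumes "q \<ge> 5" and "coprime q 6"
    and "primitive_dirichlet_char q chi" and "real_char chi"
    and "multiplicative_fn f" and "\<forall>n. f n \<in> {-1, 1}"
    and "pdist_finite (\<lambda>n. of_int (f n)) (\<lambda>n. chi (int n))"
    and "S \<subseteq> {0, 1, 2, 3}" and "card S = 2 \<or> card S = 3"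
    and "\<forall>j\<in>S. a j > 0 \<and> a j dvd int q"
  shows "Xi q chi S a = 0"
proof -
  have dc: "dirichlet_char q chi" using assms(3) unfolding primitive_dirichlet_char_def by blast
  obtain t where t: "0 \<le> t" "t < int q" "chi t = -1" using char_minus1[OF assms(3,4)] assms(1) by auto
  have ct: "coprime t (int q)" using dc t(3) unfolding dirichlet_char_def by (metis neg_equal_0_iff_equal zero_neq_one)
  define A where "A = {b \<in> PiE S (\<lambda>_. {0..<int q}). admissible q S a b}"
  have qpos: "int q > 0" using assms(1) by simp
  have finS: "finite S" using assms(8) finite_subset by blast
  have finA: "finite A" unfolding A_def using finS by (intro finite_subset[OF _ finite_PiE[of S "\<lambda>_. {0..<int q}"]]) auto
  have chm: "chi ((t * x) mod int q) = - chi x" for x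
    using char_mod[OF dc] char_mult[OF dc] t(3) by simp
  have Xi_eq: "Xi q chi S a = sum (\<lambda>b. \<Prod>j\<in>S. chi (b j)) A" unfolding Xi_def A_def by simp
  from assms(9) show ?thesis
  proof
    assume c3: "card S = 3"
    define g where "g = (\<lambda>b j. if j \<in> S then (t * b j) mod int q else b j)"
    have "sum (\<lambda>b. \<Prod>j\<in>S. chi (b j)) A = 0"
    proof -
      have h1: "g ` A \<subseteq> A"
      proof
        fix c assume "c \<in> g ` A"
        then obtain b where cb: "c = g b" and b: "b \<in> A" by (rule imageE)
        have bP1: "b \<in> PiE S (\<lambda>_. {0..<int q})" using b unfolding A_def by simp
        have bP2: "admissible q S a b" using b unfolding A_def by simp
        have cP: "c \<in> PiE S (\<lambda>_. {0..<int q})"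
        proof (rule PiE_I)
          fix j assume jS: "j \<in> S"
          have "c j = (t * b j) mod int q" unfolding cb g_def using jS by simp
          also have "\<dots> \<in> {0..<int q}" using qpos by simp
          finally show "c j \<in> {0..<int q}" .
        next
          fix j assume jS: "j \<notin> S"
          have "c j = b j" unfolding cb g_def using jS by simp
          also have "\<dots> = undefined" by (rule PiE_arb[OF bP1 jS])
          finally show "c j = undefined" .
        qed
        have an: "\<forall>j\<in>S. a j \<noteq> 0" using assms(10) by fastforce
        have "admissible q S a (\<lambda>j. if j \<in> S then (t * b j) mod int q else b j)" by (rule adm_scale[OF bP2 an])
        hence cA: "admissible q S a c" unfolding cb g_def .
        show "c \<in> A" unfolding A_def using cP cA by (intro CollectI conjI)
      qed
      have h2: "inj_on g A"
      proof
        fix b c assume bc: "b \<in> A" "c \<in> A" "g b = g c"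
        show "b = c"
        proof
          fix j show "b j = c j"
          proof (cases "j \<in> S")
            case True
            have "g b j = g c j" using fun_cong[OF bc(3)] .
            hence e: "(t * b j) mod int q = (t * c j) mod int q" using True unfolding g_def by simp
            have bP: "b \<in> PiE S (\<lambda>_. {0..<int q})" "c \<in> PiE S (\<lambda>_. {0..<int q})" using bc(1,2) unfolding A_def by auto
            have "b j \<in> {0..<int q}" "c j \<in> {0..<int q}" using PiE_mem[OF bP(1) True] PiE_mem[OF bP(2) True] by auto
            hence "0 \<le> b j" "b j < int q" "0 \<le> c j" "c j < int q" by auto
            thus ?thesis using scale_inj[OF ct _ _ _ _ e] by blast
          next
            case False
            have bP: "b \<in> PiE S (\<lambda>_. {0..<int q})" "c \<in> PiE S (\<lambda>_. {0..<int q})" using bc(1,2) unfolding A_def by auto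
            thus ?thesis using PiE_arb[OF bP(1) False] PiE_arb[OF bP(2) False] by simp
          qed
        qed
      qed
      have h3: "\<forall>b\<in>A. (\<Prod>j\<in>S. chi (g b j)) = - (\<Prod>j\<in>S. chi (b j))"
      proof
        fix b assume "b \<in> A"
        have "(\<Prod>j\<in>S. chi (g b j)) = (\<Prod>j\<in>S. (-1) * chi (b j))"
          using chm by (intro prod.cong) (simp_all add: g_def)
        also have "\<dots> = (\<Prod>j\<in>S. (-1::complex)) * (\<Prod>j\<in>S. chi (b j))" by (rule prod.distrib)
        also have "\<dots> = (-1) ^ card S * (\<Prod>j\<in>S. chi (b j))" by simp
        finally show "(\<Prod>j\<in>S. chi (g b j)) = - (\<Prod>j\<in>S. chi (b j))" using c3 by simp
      qed
      show ?thesis using sum_neg_zero[where F="\<lambda>b. \<Prod>j\<in>S. chi (b j)" and g=g, OF finA h1 h2 h3].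
    qed
    thus ?thesis using Xi_eq by simp
  next
    assume c2: "card S = 2"
    then obtain i j where ij: "S = {i, j}" "i < j"
      by (metis card_2_iff insert_commute linorder_neqE_nat)
    have j3: "j \<le> 3" using assms(8) ij by auto
    have AP: "A = PiE S (\<lambda>_. {0..<int q})"
    proof -
      have "a i > 0" "a j > 0" "a j dvd int q" using assms(10) ij(1) by auto
      hence "\<forall>b. admissible q S a b" using adm_two[OF ij(2) j3 assms(2)] ij(1) by blast
      thus ?thesis unfolding A_def by blast
    qed
    define g where "g = (\<lambda>b. b(i := (t * b i) mod int q))"
    have "sum (\<lambda>b. \<Prod>j\<in>S. chi (b j)) A = 0"
    proof -
      have iS: "i \<in> S" using ij by simp
      have h1: "g ` A \<subseteq> A"
      proof
        fix c assume "c \<in> g ` A"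
        then obtain b where cb: "c = g b" and b: "b \<in> A" by (rule imageE)
        have bP: "b \<in> PiE S (\<lambda>_. {0..<int q})" using b AP by simp
        have m: "(t * b i) mod int q \<in> {0..<int q}" using qpos by simp
        have "b(i := (t * b i) mod int q) \<in> PiE (insert i S) (\<lambda>_. {0..<int q})"
          by (rule PiE_fun_upd[OF m bP])
        hence "c \<in> PiE S (\<lambda>_. {0..<int q})" unfolding cb g_def using iS by (simp add: insert_absorb)
        thus "c \<in> A" using AP by simp
      qed
      have h2: "inj_on g A"
      proof
        fix b c assume bc: "b \<in> A" "c \<in> A" "g b = g c"
        have bP: "b \<in> PiE S (\<lambda>_. {0..<int q})" "c \<in> PiE S (\<lambda>_. {0..<int q})" using bc(1,2) AP by simp_all
        show "b = c"
        proof
          fix k show "b k = c k"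
          proof (cases "k = i")
            case True
            have "g b i = g c i" using fun_cong[OF bc(3)] .
            hence e: "(t * b i) mod int q = (t * c i) mod int q" unfolding g_def by simp
            have "b i \<in> {0..<int q}" "c i \<in> {0..<int q}" using PiE_mem[OF bP(1) iS] PiE_mem[OF bP(2) iS] by auto
            hence "0 \<le> b i" "b i < int q" "0 \<le> c i" "c i < int q" by auto
            hence "b i = c i" using scale_inj[OF ct _ _ _ _ e] by blast
            thus ?thesis using True by simp
          next
            case False
            have "g b k = g c k" using fun_cong[OF bc(3)] .
            thus ?thesis unfolding g_def using False by simp
          qed
        qed
      qed
      have h3: "\<forall>b\<in>A. (\<Prod>k\<in>S. chi (g b k)) = - (\<Prod>k\<in>S. chi (b k))"
      proof
        fix b assume "b \<in> A"
        show "(\<Prod>k\<in>S. chi (g b k)) = - (\<Prod>k\<in>S. chi (b k))"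
        proof -
          have ne: "i \<noteq> j" using ij by simp
          have "(\<Prod>k\<in>S. chi (g b k)) = chi (g b i) * chi (g b j)" using ij(1) ne by simp
          also have "\<dots> = - chi (b i) * chi (b j)" unfolding g_def using ne chm[of "b i"] by simp
          also have "\<dots> = - (\<Prod>k\<in>S. chi (b k))" using ij(1) ne by simp
          finally show ?thesis .
        qed
      qed
      show ?thesis using sum_neg_zero[where F="\<lambda>b. \<Prod>k\<in>S. chi (b k)" and g=g, OF finA h1 h2 h3].
    qed
    thus ?thesis using Xi_eq by simp
  qed
qed

end
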